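(* Let $x,y$ be positive real numbers with $x\ne y$. For positive integers $d,d_1,d_2$ define \[ \mu_d=(x+y)^d-x^d-y^d,\quad \omega_d=x^d+y^d-2\left(\tfrac{x+y}{2}\right)^d, \] \[ \psi_{d_1,d_2}=x^{d_1}y^{d_2}+x^{d_2}y^{d_1},\quad \phi_{d_1,d_2}=2\left(\tfrac{x+y}{2}\right)^{d_1+d_2}-x^{d_1}y^{d_2}-x^{d_2}y^{d_1}. \] Let $a,b,s,t$ be positive integers with $a\ge 2$ and $b\ge t\ge s\ge a>\binom{b-a}{2}$. Then \[ \frac{\omega_t}{\mu_t}\le\frac{\omega_a}{\mu_a}<\frac{\phi_{s,t}}{\psi_{s,t}}, \] equivalently $\mu_t\omega_a-\mu_a\omega_t\ge 0$ and $\mu_a\phi_{s,t}-\omega_a\psi_{s,t}>0$. *)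

theory Defs
  imports Complex_Main
begin

definition mu :: "real \<Rightarrow> real \<Rightarrow> nat \<Rightarrow> real" where
  "mu x y d = (x + y) ^ d - x ^ d - y ^ d"

definition omega :: "real \<Rightarrow> real \<Rightarrow> nat \<Rightarrow> real" where
  "omega x y d = x ^ d + y ^ d - 2 * ((x + y) / 2) ^ d"

definition psi :: "real \<Rightarrow> real \<Rightarrow> nat \<Rightarrow> nat \<Rightarrow> real" where
  "psi x y d1 d2 = x ^ d1 * y ^ d2 + x ^ d2 * y ^ d1"

definition phi :: "real \<Rightarrow> real \<Rightarrow> nat \<Rightarrow> nat \<Rightarrow> real" where
  "phi x y d1 d2 = 2 * ((x + y) / 2) ^ (d1 + d2) - x ^ d1 * y ^ d2 - x ^ d2 * y ^ d1"

end

theory Submission imports Defs begin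

lemma O_nonneg: "0 \<le> (u::real) \<Longrightarrow> u \<le> 1 \<Longrightarrow> 0 \<le> (1+u)^n - (1-u)^n"
  using power_mono[of "1-u" "1+u" n] by simp

lemma E_rec: "(1+u)^(Suc n) + (1-u)^(Suc n) = ((1+u)^n + (1-u)^n) + (u::real) * ((1+u)^n - (1-u)^n)"
  by (simp add: algebra_simps)
lemma O_rec: "(1+u)^(Suc n) - (1-u)^(Suc n) = ((1+u)^n - (1-u)^n) + (u::real) * ((1+u)^n + (1-u)^n)"
  by (simp add: algebra_simps)

lemma E_mono: "0 \<le> (u::real) \<Longrightarrow> u \<le> 1 \<Longrightarrow> (1+u)^n + (1-u)^n \<le> (1+u)^(Suc n) + (1-u)^(Suc n)"
  unfolding E_rec using O_nonneg[of u n] by simp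

lemma O_le: assumes "0 \<le> (u::real)" "u \<le> 1"
  shows "(1+u)^n - (1-u)^n \<le> real n * u * ((1+u)^n + (1-u)^n)"
proof (induction n)
  case 0 then show ?case by simp
next
  case (Suc n)
  have "(1+u)^(Suc n) - (1-u)^(Suc n) \<le> real n * u * ((1+u)^n + (1-u)^n) + u * ((1+u)^n + (1-u)^n)"
    unfolding O_rec using Suc by simp
  also have "\<dots> = real (Suc n) * u * ((1+u)^n + (1-u)^n)" by (simp add: algebra_simps)
  also have "\<dots> \<le> real (Suc n) * u * ((1+u)^(Suc n) + (1-u)^(Suc n))"
    using E_mono[OF assms, of n] assms by (intro mult_left_mono) auto
  finally show ?case .
qed

lemma E_nonneg: "(u::real) \<le> 1 \<Longrightarrow> -1 \<le> u \<Longrightarrow> 0 \<le> (1+u)^n + (1-u)^n"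
  by simp

lemma E_bound: assumes "0 \<le> (u::real)" "u \<le> 1"
  shows "(1+u)^k + (1-u)^k \<le> 2 * (1+u^2)^(k choose 2)"
proof (induction k)
  case 0 then show ?case by simp
next
  case (Suc k)
  have E0: "0 \<le> (1+u)^k + (1-u)^k" using assms by simp
  have "(1+u)^(Suc k) + (1-u)^(Suc k) \<le> ((1+u)^k + (1-u)^k) + u * (real k * u * ((1+u)^k + (1-u)^k))"
    unfolding E_rec using O_le[OF assms, of k] assms by (intro add_left_mono mult_left_mono) auto
  also have "\<dots> = (1 + real k * u^2) * ((1+u)^k + (1-u)^k)" by (simp add: algebra_simps power2_eq_square)
  also have "\<dots> \<le> (1+u^2)^k * (2 * (1+u^2)^(k choose 2))"
  proof (rule mult_mono)
    have "-1 \<le> u^2" by (smt (verit) zero_le_power2)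
    then show "1 + real k * u^2 \<le> (1+u^2)^k" using Bernoulli_inequality[of "u^2" k] by simp
  qed (use Suc E0 in auto)
  also have "\<dots> = 2 * (1+u^2)^(Suc k choose 2)"
    by (simp add: numeral_2_eq_2 power_add algebra_simps)
  finally show ?case .
qed

lemma EO_bound: assumes "0 \<le> (u::real)" "u \<le> 1" "1 \<le> n"
  shows "(1+u)^n + (1-u)^n \<le> 2 + (2^n - 2) * u^2 \<and> (1+u)^n - (1-u)^n \<le> 2^n * u"
  using assms(3)
proof (induction n rule: dec_induct)
  case base then show ?case by simp
next
  case (step n)
  have E: "(1+u)^n + (1-u)^n \<le> 2 + (2^n - 2) * u^2" and O: "(1+u)^n - (1-u)^n \<le> 2^n * u" using step by auto
  have p: "(2::real)^n \<ge> 2" using step(1) by (metis numeral_le_iff one_le_numeral power_increasing power_one_right semiring_norm(69))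
  have "(1+u)^(Suc n) + (1-u)^(Suc n) \<le> 2 + (2^n - 2) * u^2 + u * (2^n * u)"
    unfolding E_rec using E mult_left_mono[OF O assms(1)] by linarith
  also have "\<dots> = 2 + (2^Suc n - 2) * u^2" by (simp add: algebra_simps power2_eq_square)
  finally have 1: "(1+u)^(Suc n) + (1-u)^(Suc n) \<le> 2 + (2^Suc n - 2) * u^2" .
  have u2: "u^2 \<le> 1" using assms by (simp add: power_le_one)
  have B: "2 + (2^n - 2) * u^2 \<le> (2::real)^n"
    using mult_left_mono[OF u2, of "2^n-2"] p by simp
  have "(1+u)^(Suc n) - (1-u)^(Suc n) \<le> 2^n * u + u * 2^n"
    unfolding O_rec using O mult_left_mono[OF order.trans[OF E B] assms(1)] by linarith
  also have "\<dots> = 2 ^ Suc n * u" by simp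
  finally show ?case using 1 by simp
qed

lemma cross_nonneg: "0 \<le> (x::real) \<Longrightarrow> 0 \<le> y \<Longrightarrow> 0 \<le> (x^e - y^e) * (x - y)"
proof (cases "x \<le> y")
  case True
  assume "0 \<le> x" "0 \<le> y"
  then have "x^e \<le> y^e" using True by (intro power_mono) auto
  then show ?thesis using True by (intro mult_nonpos_nonpos) auto
next
  case False
  assume "0 \<le> x" "0 \<le> y"
  then have "y^e \<le> x^e" using False by (intro power_mono) auto
  then show ?thesis using False by auto
qed

lemma mu_Suc: "mu x y (Suc d) = (x + y) * mu x y d + (x^d * y + x * y^d)"
  unfolding mu_def by (simp add: algebra_simps)

lemma mu_bound: assumes "0 \<le> (x::real)" "0 \<le> y" "1 \<le> d"
  shows "mu x y (Suc d) \<le> (2^d - 1) * (x^d * y + x * y^d)"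
  using assms(3)
proof (induction d rule: dec_induct)
  case base then show ?case by (simp add: mu_def power2_eq_square algebra_simps)
next
  case (step d)
  obtain e where e: "d = Suc e" using step(1) by (cases d) auto
  have c: "0 \<le> x*y*((x^e - y^e) * (x - y))" using cross_nonneg[OF assms(1,2), of e] assms by simp
  have key: "(x + y) * (x^d * y + x * y^d) \<le> 2 * (x^Suc d * y + x * y^Suc d)"
    using c unfolding e by (simp add: algebra_simps)
  have p: "(1::real) \<le> 2^d - 1" using step(1)
    by (metis diff_add_cancel le_diff_eq one_add_one one_le_power power_increasing power_one_right one_le_numeral add_le_cancel_left)
  have "mu x y (Suc (Suc d)) \<le> (x+y) * ((2^d - 1) * (x^d * y + x * y^d)) + (x^Suc d * y + x * y^Suc d)"
    unfolding mu_Suc[of x y "Suc d"] using mult_left_mono[OF step(3), of "x+y"] assms by simp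
  also have "\<dots> = (2^d - 1) * ((x + y) * (x^d * y + x * y^d)) + (x^Suc d * y + x * y^Suc d)"
    by (simp add: algebra_simps)
  also have "\<dots> \<le> (2^d - 1) * (2 * (x^Suc d * y + x * y^Suc d)) + (x^Suc d * y + x * y^Suc d)"
    using mult_left_mono[OF key, of "2^d - 1"] p by simp
  also have "\<dots> = (2^Suc d - 1) * (x^Suc d * y + x * y^Suc d)" by (simp add: algebra_simps)
  finally show ?case .
qed

lemma pow2_ge2: "1 \<le> n \<Longrightarrow> (2::real) \<le> 2^n"
  by (metis numeral_le_iff one_le_numeral power_increasing power_one_right semiring_norm(69))

lemma pow2_gt2: "2 \<le> n \<Longrightarrow> (2::real) < 2^n"
proof -
  assume "2 \<le> n"
  then have "(2::real)^2 \<le> 2^n" by (intro power_increasing) auto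
  then show ?thesis by simp
qed

lemma mu_norm: "mu (1+u) (1-u) d = 2^d - ((1+u)^d + (1-u)^d)"
  unfolding mu_def by simp
lemma omega_norm: "omega (1+u) (1-u) d = ((1+u)^d + (1-u)^d) - 2"
  unfolding omega_def by simp

lemma mu_norm_pos: assumes "0 < (u::real)" "u < 1" "2 \<le> d"
  shows "0 < mu (1+u) (1-u) d"
proof -
  have "(1+u)^d + (1-u)^d \<le> 2 + (2^d - 2) * u^2" using EO_bound[of u d] assms by auto
  moreover have "u^2 < 1" using assms by (simp add: power_less_one_iff)
  moreover have "(2::real) < 2^d" using pow2_gt2 assms by auto
  ultimately have "(2^d - 2) * u^2 < (2^d - 2) * 1"
    by (intro mult_strict_left_mono) auto
  then have "(2^d - 2) * u^2 < 2^d - 2" by simp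
  with \<open>(1+u)^d + (1-u)^d \<le> 2 + (2^d - 2) * u^2\<close> have "(1+u)^d + (1-u)^d < 2^d"
    by linarith
  then show ?thesis unfolding mu_norm by simp
qed

lemma ratio_norm: "omega (1+u) (1-u) d / mu (1+u) (1-u) d = (2^d - 2) / mu (1+u) (1-u) d - 1"
  if "mu (1+u) (1-u) d \<noteq> 0"
  using that unfolding mu_norm omega_norm by (simp add: field_simps)

lemma G_step: assumes "0 < (u::real)" "u < 1" "2 \<le> d"
  shows "mu (1+u) (1-u) d * (2^Suc d - 2) \<le> mu (1+u) (1-u) (Suc d) * (2^d - 2)"
proof -
  let ?T = "(1+u)^d * (1-u) + (1+u) * (1-u)^d"
  have rec: "mu (1+u) (1-u) (Suc d) = 2 * mu (1+u) (1-u) d + ?T"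
    using mu_Suc[of "1+u" "1-u" d] by simp
  have b: "mu (1+u) (1-u) (Suc d) \<le> (2^d - 1) * ?T"
    using mu_bound[of "1+u" "1-u" d] assms by simp
  have "mu (1+u) (1-u) d * (2^Suc d - 2) = (mu (1+u) (1-u) (Suc d) - ?T) * (2^d - 1)"
    using rec by (simp add: algebra_simps)
  also have "\<dots> \<le> mu (1+u) (1-u) (Suc d) * (2^d - 2)" using b by (simp add: algebra_simps)
  finally show ?thesis .
qed

lemma G_mono: assumes "0 < (u::real)" "u < 1" "2 \<le> a" "a \<le> t"
  shows "mu (1+u) (1-u) a / (2^a - 2) \<le> mu (1+u) (1-u) t / (2^t - 2)"
  using assms(4)
proof (induction t rule: dec_induct)
  case base then show ?case by simp
next
  case (step d)
  have d2: "2 \<le> d" using step assms by auto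
  have p1: "(0::real) < 2^d - 2" using pow2_gt2[OF d2] by simp
  have p2: "(0::real) < 2^Suc d - 2" using pow2_gt2[of "Suc d"] d2 by simp
  have "mu (1+u) (1-u) d / (2^d - 2) \<le> mu (1+u) (1-u) (Suc d) / (2^Suc d - 2)"
    using G_step[OF assms(1,2) d2] p1 p2 by (simp add: divide_simps)
  then show ?case using step(3) by linarith
qed

lemma part1: assumes "0 < (u::real)" "u < 1" "2 \<le> a" "a \<le> t"
  shows "omega (1+u) (1-u) t / mu (1+u) (1-u) t \<le> omega (1+u) (1-u) a / mu (1+u) (1-u) a"
proof -
  have ma: "0 < mu (1+u) (1-u) a" using mu_norm_pos assms by auto
  have mt: "0 < mu (1+u) (1-u) t" using mu_norm_pos assms by auto
  have pa: "(0::real) < 2^a - 2" using pow2_gt2[of a] assms by simp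
  have pt: "(0::real) < 2^t - 2" using pow2_gt2[of t] assms by simp
  have g: "mu (1+u) (1-u) a / (2^a - 2) \<le> mu (1+u) (1-u) t / (2^t - 2)" using G_mono assms by blast
  have "(2^t - 2) / mu (1+u) (1-u) t \<le> (2^a - 2) / mu (1+u) (1-u) a"
    using g ma mt pa pt by (simp add: divide_simps mult.commute)
  then show ?thesis using ratio_norm ma mt by simp
qed

lemma psi_norm: "psi (1+u) (1-u) s (s+m) = (1-u^2)^s * ((1+u)^m + (1-u)^m)"
proof -
  have "(1-u^2)^s = (1+u)^s * (1-u)^s"
    by (simp add: power2_eq_square power_mult_distrib[symmetric] algebra_simps)
  then show ?thesis unfolding psi_def by (simp add: power_add algebra_simps)
qed

lemma phi_norm: "phi (1+u) (1-u) s t = 2 - psi (1+u) (1-u) s t"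
  unfolding phi_def psi_def by simp

lemma part2: assumes "0 < (u::real)" "u < 1" "2 \<le> a" "a \<le> s" "(m choose 2) < a"
  shows "omega (1+u) (1-u) a / mu (1+u) (1-u) a < phi (1+u) (1-u) s (s+m) / psi (1+u) (1-u) s (s+m)"
proof -
  define v where "v = u^2"
  have v0: "0 < v" and v1: "v < 1" using assms by (auto simp: v_def power_less_one_iff)
  define Em where "Em = (1+u)^m + (1-u)^m"
  have Em0: "0 < Em" unfolding Em_def using assms
    by (smt (verit) zero_less_power)
  have Eb: "Em \<le> 2 * (1+v)^(m choose 2)" unfolding Em_def v_def using E_bound assms by auto
  have c: "(1+v)^(m choose 2) \<le> (1+v)^(a-1)" using v0 assms by (intro power_increasing) auto
  have d: "(1-v)^(s-1) \<le> (1-v)^(a-1)" using v0 v1 assms by (intro power_decreasing) auto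
  have e: "(1-v)^(a-1) * (1+v)^(a-1) < 1"
  proof -
    have "(1-v)^(a-1) * (1+v)^(a-1) = (1 - v^2)^(a-1)"
      by (simp add: power_mult_distrib[symmetric] power2_eq_square algebra_simps)
    also have "\<dots> < 1"
    proof -
      have "v^2 \<le> 1" using v0 v1 by (simp add: power_le_one)
      moreover have "0 < v^2" using v0 by simp
      ultimately show ?thesis using assms by (subst power_less_one_iff) auto
    qed
    finally show ?thesis .
  qed
  have "(1-v)^(s-1) * Em \<le> (1-v)^(a-1) * (2 * (1+v)^(a-1))"
    using d Eb c v1 Em0 by (intro mult_mono order.trans[OF Eb]) auto
  also have "\<dots> < 2" using e by simp
  finally have f: "(1-v)^(s-1) * Em < 2" .
  have ps: "psi (1+u) (1-u) s (s+m) = (1-v) * ((1-v)^(s-1) * Em)"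
    unfolding psi_norm Em_def v_def using assms by (cases s) auto
  have psi0: "0 < psi (1+u) (1-u) s (s+m)" unfolding ps using v1 Em0 by simp
  have psi_lt: "psi (1+u) (1-u) s (s+m) < 2 * (1-v)" unfolding ps using mult_strict_left_mono[OF f, of "1-v"] v1 by (simp add: algebra_simps)
  have Ea: "(1+u)^a + (1-u)^a \<le> 2 + (2^a - 2) * v" unfolding v_def using EO_bound[of u a] assms by auto
  have mua: "(2^a - 2) * (1-v) \<le> mu (1+u) (1-u) a" unfolding mu_norm using Ea by (simp add: algebra_simps)
  have pa: "(0::real) < 2^a - 2" using pow2_gt2[of a] assms by simp
  have ma: "0 < mu (1+u) (1-u) a" using mu_norm_pos assms by auto
  have "(2^a - 2) / mu (1+u) (1-u) a \<le> 1 / (1-v)"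
    using mua pa ma v1 by (simp add: divide_simps mult.commute)
  also have "\<dots> < 2 / psi (1+u) (1-u) s (s+m)"
    using psi_lt psi0 v1 by (simp add: divide_simps)
  finally have "(2^a - 2) / mu (1+u) (1-u) a < 2 / psi (1+u) (1-u) s (s+m)" .
  moreover have "phi (1+u) (1-u) s (s+m) / psi (1+u) (1-u) s (s+m) = 2 / psi (1+u) (1-u) s (s+m) - 1"
    unfolding phi_norm using psi0 by (simp add: field_simps)
  ultimately show ?thesis using ratio_norm ma by simp
qed

lemma mu_scale: "mu (c*p) (c*q) d = c^d * mu p q d"
  unfolding mu_def by (simp add: power_mult_distrib algebra_simps flip: distrib_left)
lemma omega_scale: "omega (c*p) (c*q) d = c^d * omega p q d"
proof -
  have "(c*p + c*q)/2 = c * ((p+q)/2)" by (simp add: algebra_simps)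
  then show ?thesis unfolding omega_def by (simp only: power_mult_distrib) (simp add: algebra_simps)
qed
lemma psi_scale: "psi (c*p) (c*q) s t = c^(s+t) * psi p q s t"
  unfolding psi_def by (simp add: power_mult_distrib power_add algebra_simps)
lemma phi_scale: "phi (c*p) (c*q) s t = c^(s+t) * phi p q s t"
proof -
  have "(c*p + c*q)/2 = c * ((p+q)/2)" by (simp add: algebra_simps)
  then show ?thesis unfolding phi_def by (simp only: power_mult_distrib) (simp add: power_add algebra_simps)
qed

lemma choose2_mono: "m \<le> n \<Longrightarrow> m choose 2 \<le> n choose 2"
  unfolding choose_two by (intro div_le_mono mult_le_mono) auto

lemma main_lt:
  fixes x y :: real and a b s t :: nat
  assumes "y > 0" "y < x"
    and "a \<ge> 2" "b \<ge> t" "t \<ge> s" "s \<ge> a" "a > (b - a) choose 2"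
  shows "omega x y t / mu x y t \<le> omega x y a / mu x y a
       \<and> omega x y a / mu x y a < phi x y s t / psi x y s t"
proof -
  define M where "M = (x+y)/2"
  define u where "u = (x-y)/(x+y)"
  have M0: "0 < M" using assms by (simp add: M_def)
  have u0: "0 < u" and u1: "u < 1" using assms by (auto simp: u_def divide_simps)
  have x: "x = M * (1+u)" using assms by (simp add: M_def u_def field_simps)
  have y: "y = M * (1-u)" using assms by (simp add: M_def u_def field_simps)
  have M0': "M^n \<noteq> 0" for n using M0 by simp
  have r1: "omega x y d / mu x y d = omega (1+u) (1-u) d / mu (1+u) (1-u) d" for d
    unfolding x y mu_scale omega_scale using M0' M0 by simp
  have r2: "phi x y s t / psi x y s t = phi (1+u) (1-u) s t / psi (1+u) (1-u) s t"
    unfolding x y phi_scale psi_scale using M0' M0 by simp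
  define m where "m = t - s"
  have t: "t = s + m" using assms by (simp add: m_def)
  have mc: "m choose 2 < a" using choose2_mono[of m "b-a"] assms unfolding m_def by linarith
  show ?thesis unfolding r1 r2
    using part1[OF u0 u1 assms(3), of t] part2[OF u0 u1 assms(3) assms(6) mc] assms unfolding t by auto
qed

lemma mu_sym: "mu x y d = mu y x d" unfolding mu_def by (simp add: algebra_simps)
lemma omega_sym: "omega x y d = omega y x d" unfolding omega_def by (simp add: algebra_simps)
lemma psi_sym: "psi x y s t = psi y x s t" unfolding psi_def by (simp add: algebra_simps)
lemma phi_sym: "phi x y s t = phi y x s t" unfolding phi_def by (simp add: algebra_simps)

theorem proposition3p3:
  fixes x y :: real and a b s t :: nat
  assumes "x > 0" "y > 0" "x \<noteq> y"
    and "a \<ge> 2" "b \<ge> t" "t \<ge> s" "s \<ge> a" "a > (b - a) choose 2"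
  shows "omega x y t / mu x y t \<le> omega x y a / mu x y a
       \<and> omega x y a / mu x y a < phi x y s t / psi x y s t"
proof (cases "y < x")
  case True
  show ?thesis by (rule main_lt[where b=b]) (use assms True in auto)
next
  case False
  then have "x < y" using assms by auto
  have "omega y x t / mu y x t \<le> omega y x a / mu y x a
       \<and> omega y x a / mu y x a < phi y x s t / psi y x s t"
    by (rule main_lt[where b=b]) (use assms \<open>x < y\<close> in auto)
  then show ?thesis
    by (simp add: mu_sym[of x y] omega_sym[of x y] psi_sym[of x y] phi_sym[of x y])
qed

end
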